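(* For all contexts $\Gamma,\Delta$ and terms $M,A,B$: if $\Gamma\approx_\alpha\Delta$, $A\sim_\alpha B$ and $\Gamma\vdash M:A$, then $\Delta\vdash M:B$.
   Context: Let $\mathcal V$ (the variables) be a type with decidable equality, equipped with functions $\mathrm{encode}:\mathcal V\to\mathbb N$ and $\mathrm{decode}:\mathbb N\to\mathcal V$ such that $\mathrm{encode}(\mathrm{decode}\,n)=n$ for all $n$. Let $\mathcal C$ (the constants) be any type. Terms $\Lambda$ are generated by: $c\,k$ ($k\in\mathcal C$), $v\,x$ ($x\in\mathcal V$), $\lambda[x:A]M$, $\Pi[x:A]B$ and $M\cdot N$; in $\lambda[x:A]M$ and $\Pi[x:A]B$ the name $x$ binds in $M$ (resp. $B$) but not in $A$. Terms are raw first-order syntax (not identified up to renaming of bound variables) and $\equiv$ denotes syntactic identity. The list of free variables is $\mathrm{fv}(c\,k)=[\,]$, $\mathrm{fv}(v\,x)=[x]$, $\mathrm{fv}(\lambda[x:A]M)=\mathrm{fv}\,A\mathbin{+\!\!+}(\mathrm{fv}\,M-x)$, $\mathrm{fv}(\Pi[x:A]B)=\mathrm{fv}\,A\mathbin{+\!\!+}(\mathrm{fv}\,B-x)$, $\mathrm{fv}(M\cdot N)=\mathrm{fv}\,M\mathbin{+\!\!+}\mathrm{fv}\,N$, where $\mathbin{+\!\!+}$ is list concatenation and $xs-x$ deletes every occurrence of $x$ from $xs$. Fix a function $\chi':\mathrm{List}\,\mathbb N\to\mathbb N$ with $\chi'(ns)\notin ns$ for every list $ns$, and put $X'(xs)=\mathrm{decode}(\chi'(\mathrm{map}\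 \mathrm{encode}\ xs))$. A substitution is any function $\sigma:\mathcal V\to\Lambda$; $\iota=v$ is the identity substitution; $(\sigma,x:=N)(y)=N$ if $y=x$ and $\sigma\,y$ otherwise. For a substitution $\sigma$ and a list $xs$ of variables, $X(\sigma,xs)=X'(\text{concatenation of the lists }\mathrm{fv}(\sigma\,y)\text{ for }y\in xs)$. The action $M\bullet\sigma$ is defined by structural recursion: $c\,k\bullet\sigma=c\,k$; $v\,x\bullet\sigma=\sigma\,x$; $(M\cdot N)\bullet\sigma=(M\bullet\sigma)\cdot(N\bullet\sigma)$; $(\lambda[x:A]M)\bullet\sigma=\lambda[y:A\bullet\sigma](M\bullet(\sigma,x:=v\,y))$ with $y=X(\sigma,\mathrm{fv}\,M-x)$; $(\Pi[x:A]B)\bullet\sigma=\Pi[y:A\bullet\sigma](B\bullet(\sigma,x:=v\,y))$ with $y=X(\sigma,\mathrm{fv}\,B-x)$. Unary substitution is $M[x:=N]=M\bullet(\iota,x:=N)$. $\alpha$-conversion $\sim_\alpha$ is the inductively defined relation with rules: $c\,k\sim_\alpha c\,k$; $v\,x\sim_\alpha v\,x$; $M\cdot N\sim_\alpha M'\cdot N'$ if $M\sim_\alpha M'$ and $N\sim_\alpha N'$; $\lambda[x:A]M\sim_\alpha\lambda[x':A']M'$ if $A\sim_\alpha A'$ and there is a variable $y$ with $y\notin\mathrm{fv}\,M-x$, $y\notin\mathrm{fv}\,M'-x'$ and $M[x:=v\,y]\equiv M'[x':=v\,y]$; and the same rule with $\Pi$ in place of $\lambda$. $\beta$-contraction is $(\lambda[x:A]M)\cdot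 N\ \triangleright_\beta\ M[x:=N]$. One-step $\beta$-reduction $\to_\beta$ is its contextual closure, inductively: $M\to_\beta N$ if $M\triangleright_\beta N$; $\lambda[x:A]M\to_\beta\lambda[x:A]M'$ and $\Pi[x:A]M\to_\beta\Pi[x:A]M'$ if $M\to_\beta M'$; $\lambda[x:A]M\to_\beta\lambda[x:A']M$ and $\Pi[x:A]M\to_\beta\Pi[x:A']M$ if $A\to_\beta A'$; $M\cdot P\to_\beta N\cdot P$ and $P\cdot M\to_\beta P\cdot N$ if $M\to_\beta N$. $\beta$-conversion $\simeq_\beta$ is the equivalence (reflexive–symmetric–transitive) closure of $\sim_\alpha\cup\to_\beta$. Pure Type System: fix a binary relation $\mathcal A\subseteq\mathcal C\times\mathcal C$ (axioms) and a ternary relation $\mathcal R\subseteq\mathcal C\times\mathcal C\times\mathcal C$ (rules). A context is a finite list of pairs $(x,A)$ with $x\in\mathcal V$, $A\in\Lambda$; $\Gamma,x:A$ denotes the list $(x,A)::\Gamma$; $\mathrm{dom}\,\Gamma$ is the list of first components; $(x,A)\in\Gamma$ is list membership. The judgments $\Gamma\ \mathrm{ok}$ and $\Gamma\vdash M:A$ are defined mutually inductively by: (nil) $[\,]\ \mathrm{ok}$; (cons) if $\Gamma\ \mathrm{ok}$, $\Gamma\vdash A:c\,s$ and $x\notin\mathrm{dom}\,\Gamma$ then $\Gamma,x:A\ \mathrm{ok}$; (sort) if $\Gamma\ \mathrm{ok}$ and $\mathcal A\,s_1\,s_2$ then $\Gamma\vdash c\,s_1:c\,s_2$; (var) if $\Gamma\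 \mathrm{ok}$ and $(x,A)\in\Gamma$ then $\Gamma\vdash v\,x:A$; (prod) if $\mathcal R\,s_1\,s_2\,s_3$, $\Gamma\vdash A:c\,s_1$ and for every $y\notin\mathrm{dom}\,\Gamma$, $\Gamma,y:A\vdash B[x:=v\,y]:c\,s_2$, then $\Gamma\vdash\Pi[x:A]B:c\,s_3$; (abs) if $\mathcal R\,s_1\,s_2\,s_3$, $\Gamma\vdash A:c\,s_1$, for every $z\notin\mathrm{dom}\,\Gamma$, $\Gamma,z:A\vdash B[y:=v\,z]:c\,s_2$, and for every $z\notin\mathrm{dom}\,\Gamma$, $\Gamma,z:A\vdash M[x:=v\,z]:B[y:=v\,z]$, then $\Gamma\vdash\lambda[x:A]M:\Pi[y:A]B$; (app) if $\Gamma\vdash M:\Pi[x:A]B$, $\Gamma\vdash N:A$ and $\Gamma\vdash B[x:=N]:c\,s$ for some $s$, then $\Gamma\vdash M\cdot N:B[x:=N]$; (conv) if $\Gamma\vdash M:A$, $A\simeq_\beta B$ and $\Gamma\vdash B:c\,s$ for some $s$, then $\Gamma\vdash M:B$. (The premises quantified over all fresh names in (prod) and (abs) are infinitely branching.) $\Gamma\approx_\alpha\Delta$ means: $\Gamma$ and $\Delta$ have the same length and, position by position, the entries $(x,A)$ of $\Gamma$ and $(y,B)$ of $\Delta$ satisfy $x=y$ and $A\sim_\alpha B$. *)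

theory Defs
  imports Main
begin

datatype ('c, 'v) trm =
    Cst 'c
  | Var 'v
  | Lam 'v "('c, 'v) trm" "('c, 'v) trm"   (* Lam x A M  =  lambda[x:A] M *)
  | Pi  'v "('c, 'v) trm" "('c, 'v) trm"   (* Pi x A B   =  Pi[x:A] B *)
  | App "('c, 'v) trm" "('c, 'v) trm"

fun fv :: "('c, 'v) trm \<Rightarrow> 'v list" where
  "fv (Cst k) = []"
| "fv (Var x) = [x]"
| "fv (Lam x A M) = fv A @ removeAll x (fv M)"
| "fv (Pi x A B) = fv A @ removeAll x (fv B)"
| "fv (App M N) = fv M @ fv N"

definition Xp :: "(nat list \<Rightarrow> nat) \<Rightarrow> ('v \<Rightarrow> nat) \<Rightarrow> (nat \<Rightarrow> 'v) \<Rightarrow> 'v list \<Rightarrow> 'v" where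
  "Xp chi enc dec xs = dec (chi (map enc xs))"

definition Xs :: "(nat list \<Rightarrow> nat) \<Rightarrow> ('v \<Rightarrow> nat) \<Rightarrow> (nat \<Rightarrow> 'v) \<Rightarrow> ('v \<Rightarrow> ('c, 'v) trm) \<Rightarrow> 'v list \<Rightarrow> 'v" where
  "Xs chi enc dec \<sigma> xs = Xp chi enc dec (concat (map (\<lambda>y. fv (\<sigma> y)) xs))"

fun sbst :: "(nat list \<Rightarrow> nat) \<Rightarrow> ('v \<Rightarrow> nat) \<Rightarrow> (nat \<Rightarrow> 'v) \<Rightarrow> ('c, 'v) trm \<Rightarrow> ('v \<Rightarrow> ('c, 'v) trm) \<Rightarrow> ('c, 'v) trm" where
  "sbst chi enc dec (Cst k) \<sigma> = Cst k"
| "sbst chi enc dec (Var x) \<sigma> = \<sigma> x"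
| "sbst chi enc dec (App M N) \<sigma> = App (sbst chi enc dec M \<sigma>) (sbst chi enc dec N \<sigma>)"
| "sbst chi enc dec (Lam x A M) \<sigma> =
     (let y = Xs chi enc dec \<sigma> (removeAll x (fv M))
      in Lam y (sbst chi enc dec A \<sigma>) (sbst chi enc dec M (\<sigma>(x := Var y))))"
| "sbst chi enc dec (Pi x A B) \<sigma> =
     (let y = Xs chi enc dec \<sigma> (removeAll x (fv B))
      in Pi y (sbst chi enc dec A \<sigma>) (sbst chi enc dec B (\<sigma>(x := Var y))))"

definition usubst :: "(nat list \<Rightarrow> nat) \<Rightarrow> ('v \<Rightarrow> nat) \<Rightarrow> (nat \<Rightarrow> 'v) \<Rightarrow> ('c, 'v) trm \<Rightarrow> 'v \<Rightarrow> ('c, 'v) trm \<Rightarrow> ('c, 'v) trm" where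
  "usubst chi enc dec M x N = sbst chi enc dec M (Var(x := N))"

inductive alpha :: "(nat list \<Rightarrow> nat) \<Rightarrow> ('v \<Rightarrow> nat) \<Rightarrow> (nat \<Rightarrow> 'v) \<Rightarrow> ('c, 'v) trm \<Rightarrow> ('c, 'v) trm \<Rightarrow> bool"
  for chi enc dec where
  alpha_cst: "alpha chi enc dec (Cst k) (Cst k)"
| alpha_var: "alpha chi enc dec (Var x) (Var x)"
| alpha_app: "alpha chi enc dec M M' \<Longrightarrow> alpha chi enc dec N N' \<Longrightarrow> alpha chi enc dec (App M N) (App M' N')"
| alpha_lam: "alpha chi enc dec A A' \<Longrightarrow> y \<notin> set (removeAll x (fv M)) \<Longrightarrow> y \<notin> set (removeAll x' (fv M')) \<Longrightarrow>
    usubst chi enc dec M x (Var y) = usubst chi enc dec M' x' (Var y) \<Longrightarrow>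
    alpha chi enc dec (Lam x A M) (Lam x' A' M')"
| alpha_pi: "alpha chi enc dec A A' \<Longrightarrow> y \<notin> set (removeAll x (fv M)) \<Longrightarrow> y \<notin> set (removeAll x' (fv M')) \<Longrightarrow>
    usubst chi enc dec M x (Var y) = usubst chi enc dec M' x' (Var y) \<Longrightarrow>
    alpha chi enc dec (Pi x A M) (Pi x' A' M')"

inductive beta :: "(nat list \<Rightarrow> nat) \<Rightarrow> ('v \<Rightarrow> nat) \<Rightarrow> (nat \<Rightarrow> 'v) \<Rightarrow> ('c, 'v) trm \<Rightarrow> ('c, 'v) trm \<Rightarrow> bool"
  for chi enc dec where
  beta_contr: "beta chi enc dec (App (Lam x A M) N) (usubst chi enc dec M x N)"
| beta_lam_body: "beta chi enc dec M M' \<Longrightarrow> beta chi enc dec (Lam x A M) (Lam x A M')"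
| beta_pi_body: "beta chi enc dec M M' \<Longrightarrow> beta chi enc dec (Pi x A M) (Pi x A M')"
| beta_lam_ty: "beta chi enc dec A A' \<Longrightarrow> beta chi enc dec (Lam x A M) (Lam x A' M)"
| beta_pi_ty: "beta chi enc dec A A' \<Longrightarrow> beta chi enc dec (Pi x A M) (Pi x A' M)"
| beta_app_l: "beta chi enc dec M N \<Longrightarrow> beta chi enc dec (App M P) (App N P)"
| beta_app_r: "beta chi enc dec M N \<Longrightarrow> beta chi enc dec (App P M) (App P N)"

inductive bconv :: "(nat list \<Rightarrow> nat) \<Rightarrow> ('v \<Rightarrow> nat) \<Rightarrow> (nat \<Rightarrow> 'v) \<Rightarrow> ('c, 'v) trm \<Rightarrow> ('c, 'v) trm \<Rightarrow> bool"
  for chi enc dec where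
  bconv_alpha: "alpha chi enc dec M N \<Longrightarrow> bconv chi enc dec M N"
| bconv_beta: "beta chi enc dec M N \<Longrightarrow> bconv chi enc dec M N"
| bconv_refl: "bconv chi enc dec M M"
| bconv_sym: "bconv chi enc dec M N \<Longrightarrow> bconv chi enc dec N M"
| bconv_trans: "bconv chi enc dec M N \<Longrightarrow> bconv chi enc dec N P \<Longrightarrow> bconv chi enc dec M P"

type_synonym ('c, 'v) ctx = "('v \<times> ('c, 'v) trm) list"

text \<open>Pure Type System judgments; Ax = axioms, Rl = rules. Contexts: (x,A)#Gamma = Gamma, x:A.\<close>
inductive ctx_ok :: "(nat list \<Rightarrow> nat) \<Rightarrow> ('v \<Rightarrow> nat) \<Rightarrow> (nat \<Rightarrow> 'v) \<Rightarrow> ('c \<Rightarrow> 'c \<Rightarrow> bool) \<Rightarrow> ('c \<Rightarrow> 'c \<Rightarrow> 'c \<Rightarrow> bool)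
      \<Rightarrow> ('c, 'v) ctx \<Rightarrow> bool"
  and typing :: "(nat list \<Rightarrow> nat) \<Rightarrow> ('v \<Rightarrow> nat) \<Rightarrow> (nat \<Rightarrow> 'v) \<Rightarrow> ('c \<Rightarrow> 'c \<Rightarrow> bool) \<Rightarrow> ('c \<Rightarrow> 'c \<Rightarrow> 'c \<Rightarrow> bool)
      \<Rightarrow> ('c, 'v) ctx \<Rightarrow> ('c, 'v) trm \<Rightarrow> ('c, 'v) trm \<Rightarrow> bool"
  for chi enc dec Ax Rl where
  ok_nil: "ctx_ok chi enc dec Ax Rl []"
| ok_cons: "ctx_ok chi enc dec Ax Rl \<Gamma> \<Longrightarrow> typing chi enc dec Ax Rl \<Gamma> A (Cst s) \<Longrightarrow> x \<notin> set (map fst \<Gamma>) \<Longrightarrow>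
    ctx_ok chi enc dec Ax Rl ((x, A) # \<Gamma>)"
| ty_sort: "ctx_ok chi enc dec Ax Rl \<Gamma> \<Longrightarrow> Ax s1 s2 \<Longrightarrow> typing chi enc dec Ax Rl \<Gamma> (Cst s1) (Cst s2)"
| ty_var: "ctx_ok chi enc dec Ax Rl \<Gamma> \<Longrightarrow> (x, A) \<in> set \<Gamma> \<Longrightarrow> typing chi enc dec Ax Rl \<Gamma> (Var x) A"
| ty_prod: "Rl s1 s2 s3 \<Longrightarrow> typing chi enc dec Ax Rl \<Gamma> A (Cst s1) \<Longrightarrow>
    (\<forall>y. y \<notin> set (map fst \<Gamma>) \<longrightarrow>
        typing chi enc dec Ax Rl ((y, A) # \<Gamma>) (usubst chi enc dec B x (Var y)) (Cst s2)) \<Longrightarrow>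
    typing chi enc dec Ax Rl \<Gamma> (Pi x A B) (Cst s3)"
| ty_abs: "Rl s1 s2 s3 \<Longrightarrow> typing chi enc dec Ax Rl \<Gamma> A (Cst s1) \<Longrightarrow>
    (\<forall>z. z \<notin> set (map fst \<Gamma>) \<longrightarrow>
        typing chi enc dec Ax Rl ((z, A) # \<Gamma>) (usubst chi enc dec B y (Var z)) (Cst s2)) \<Longrightarrow>
    (\<forall>z. z \<notin> set (map fst \<Gamma>) \<longrightarrow>
        typing chi enc dec Ax Rl ((z, A) # \<Gamma>) (usubst chi enc dec M x (Var z)) (usubst chi enc dec B y (Var z))) \<Longrightarrow>
    typing chi enc dec Ax Rl \<Gamma> (Lam x A M) (Pi y A B)"
| ty_app: "typing chi enc dec Ax Rl \<Gamma> M (Pi x A B) \<Longrightarrow> typing chi enc dec Ax Rl \<Gamma> N A \<Longrightarrow>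
    typing chi enc dec Ax Rl \<Gamma> (usubst chi enc dec B x N) (Cst s) \<Longrightarrow>
    typing chi enc dec Ax Rl \<Gamma> (App M N) (usubst chi enc dec B x N)"
| ty_conv: "typing chi enc dec Ax Rl \<Gamma> M A \<Longrightarrow> bconv chi enc dec A B \<Longrightarrow> typing chi enc dec Ax Rl \<Gamma> B (Cst s) \<Longrightarrow>
    typing chi enc dec Ax Rl \<Gamma> M B"

definition ctx_alpha :: "(nat list \<Rightarrow> nat) \<Rightarrow> ('v \<Rightarrow> nat) \<Rightarrow> (nat \<Rightarrow> 'v) \<Rightarrow> ('c, 'v) ctx \<Rightarrow> ('c, 'v) ctx \<Rightarrow> bool" where
  "ctx_alpha chi enc dec \<Gamma> \<Delta> =
     list_all2 (\<lambda>(x, A) (y, B). x = y \<and> alpha chi enc dec A B) \<Gamma> \<Delta>"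

end

theory Submission imports Defs begin

locale pts =
  fixes chi :: "nat list \<Rightarrow> nat" and enc :: "'v \<Rightarrow> nat" and dec :: "nat \<Rightarrow> 'v"
  assumes enc_dec: "\<forall>n. enc (dec n) = n"
    and chi_fresh: "\<forall>ns. chi ns \<notin> set ns"
begin

abbreviation S :: "('c, 'v) trm \<Rightarrow> ('v \<Rightarrow> ('c, 'v) trm) \<Rightarrow> ('c, 'v) trm" where
  "S \<equiv> sbst chi enc dec"

lemma fresh: "Xs chi enc dec \<sigma> xs \<notin> set (concat (map (\<lambda>y. fv (\<sigma> y)) xs))"
proof
  let ?L = "concat (map (\<lambda>y. fv (\<sigma> y)) xs)"
  assume "Xs chi enc dec \<sigma> xs \<in> set ?L"
  hence "enc (dec (chi (map enc ?L))) \<in> set (map enc ?L)"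
    unfolding Xs_def Xp_def by simp
  moreover have "enc (dec k) = k" for k using enc_dec by blast
  ultimately have "chi (map enc ?L) \<in> set (map enc ?L)" by simp
  thus False using chi_fresh by blast
qed

lemma rem_lemma:
  assumes "y \<notin> set (concat (map (\<lambda>u. fv (\<sigma> u)) (removeAll x xs)))"
  shows "removeAll y (concat (map (\<lambda>u. fv ((\<sigma>(x := Var y)) u)) xs))
         = concat (map (\<lambda>u. fv (\<sigma> u)) (removeAll x xs))"
  using assms by (induction xs) auto

lemma fv_S: "fv (S M \<sigma>) = concat (map (\<lambda>u. fv (\<sigma> u)) (fv M))"
proof (induction M arbitrary: \<sigma>)
  case (Lam x A M)
  show ?case
    using rem_lemma[OF fresh[of \<sigma> "removeAll x (fv M)"]]
    by (simp add: Let_def Lam.IH)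
next
  case (Pi x A M)
  show ?case
    using rem_lemma[OF fresh[of \<sigma> "removeAll x (fv M)"]]
    by (simp add: Let_def Pi.IH)
qed auto

lemma S_cong: "(\<And>u. u \<in> set (fv M) \<Longrightarrow> \<sigma> u = \<sigma>' u) \<Longrightarrow> S M \<sigma> = S M \<sigma>'"
proof (induction M arbitrary: \<sigma> \<sigma>')
  case (Cst k)
  show ?case by simp
next
  case (Var x)
  thus ?case by simp
next
  case (App M N)
  have "S M \<sigma> = S M \<sigma>'" by (rule App.IH(1)) (simp add: App.prems)
  moreover have "S N \<sigma> = S N \<sigma>'" by (rule App.IH(2)) (simp add: App.prems)
  ultimately show ?case by simp
next
  case (Lam x A M)
  have m: "map (\<lambda>y. fv (\<sigma> y)) (removeAll x (fv M)) = map (\<lambda>y. fv (\<sigma>' y)) (removeAll x (fv M))"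
    by (rule map_cong) (simp_all add: Lam.prems)
  have e: "Xs chi enc dec \<sigma> (removeAll x (fv M)) = Xs chi enc dec \<sigma>' (removeAll x (fv M))"
    unfolding Xs_def m ..
  define n where "n = Xs chi enc dec \<sigma>' (removeAll x (fv M))"
  have a: "S A \<sigma> = S A \<sigma>'" by (rule Lam.IH(1)) (simp add: Lam.prems)
  have b: "S M (\<sigma>(x := Var n)) = S M (\<sigma>'(x := Var n))" by (rule Lam.IH(2)) (simp add: Lam.prems)
  show ?case by (simp add: Let_def e a b n_def[symmetric])
next
  case (Pi x A M)
  have m: "map (\<lambda>y. fv (\<sigma> y)) (removeAll x (fv M)) = map (\<lambda>y. fv (\<sigma>' y)) (removeAll x (fv M))"
    by (rule map_cong) (simp_all add: Pi.prems)
  have e: "Xs chi enc dec \<sigma> (removeAll x (fv M)) = Xs chi enc dec \<sigma>' (removeAll x (fv M))"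
    unfolding Xs_def m ..
  define n where "n = Xs chi enc dec \<sigma>' (removeAll x (fv M))"
  have a: "S A \<sigma> = S A \<sigma>'" by (rule Pi.IH(1)) (simp add: Pi.prems)
  have b: "S M (\<sigma>(x := Var n)) = S M (\<sigma>'(x := Var n))" by (rule Pi.IH(2)) (simp add: Pi.prems)
  show ?case by (simp add: Let_def e a b n_def[symmetric])
qed

lemma concat_concat2: "concat (concat xss) = concat (map concat xss)"
  by (induction xss) auto

lemma S_comp: "S (S M \<sigma>) \<tau> = S M (\<lambda>u. S (\<sigma> u) \<tau>)"
proof (induction M arbitrary: \<sigma> \<tau>)
  case (Lam x A M)
  define L where "L = removeAll x (fv M)"
  define y where "y = Xs chi enc dec \<sigma> L"
  have fy: "y \<notin> set (concat (map (\<lambda>u. fv (\<sigma> u)) L))" unfolding y_def by (rule fresh)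
  have r: "removeAll y (fv (S M (\<sigma>(x := Var y)))) = concat (map (\<lambda>u. fv (\<sigma> u)) L)"
    unfolding fv_S L_def by (rule rem_lemma) (use fy L_def in simp)
  define z where "z = Xs chi enc dec (\<lambda>u. S (\<sigma> u) \<tau>) L"
  have zz: "Xs chi enc dec \<tau> (removeAll y (fv (S M (\<sigma>(x := Var y))))) = z"
    unfolding r by (simp add: z_def Xs_def fv_S map_concat comp_def concat_concat2)
  have body: "S (S M (\<sigma>(x := Var y))) (\<tau>(y := Var z)) = S M ((\<lambda>u. S (\<sigma> u) \<tau>)(x := Var z))"
    unfolding Lam.IH
  proof (rule S_cong)
    fix u assume u: "u \<in> set (fv M)"
    show "S ((\<sigma>(x := Var y)) u) (\<tau>(y := Var z)) = ((\<lambda>u. S (\<sigma> u) \<tau>)(x := Var z)) u"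
    proof (cases "u = x")
      case False
      hence "y \<notin> set (fv (\<sigma> u))" using fy u L_def by auto
      thus ?thesis using False by (auto intro!: S_cong)
    qed simp
  qed
  have 1: "S (Lam x A M) \<sigma> = Lam y (S A \<sigma>) (S M (\<sigma>(x:=Var y)))"
    by (simp add: Let_def y_def L_def)
  have 2: "S (Lam y (S A \<sigma>) (S M (\<sigma>(x:=Var y)))) \<tau>
     = Lam z (S (S A \<sigma>) \<tau>) (S (S M (\<sigma>(x:=Var y))) (\<tau>(y := Var z)))"
    using zz by (simp add: Let_def)
  have 3: "S (Lam x A M) (\<lambda>u. S (\<sigma> u) \<tau>) = Lam z (S A (\<lambda>u. S (\<sigma> u) \<tau>)) (S M ((\<lambda>u. S (\<sigma> u) \<tau>)(x := Var z)))"
    by (simp add: Let_def z_def L_def)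
  show ?case unfolding 1 2 3 body by (simp only: Lam.IH)
next
  case (Pi x A M)
  define L where "L = removeAll x (fv M)"
  define y where "y = Xs chi enc dec \<sigma> L"
  have fy: "y \<notin> set (concat (map (\<lambda>u. fv (\<sigma> u)) L))" unfolding y_def by (rule fresh)
  have r: "removeAll y (fv (S M (\<sigma>(x := Var y)))) = concat (map (\<lambda>u. fv (\<sigma> u)) L)"
    unfolding fv_S L_def by (rule rem_lemma) (use fy L_def in simp)
  define z where "z = Xs chi enc dec (\<lambda>u. S (\<sigma> u) \<tau>) L"
  have zz: "Xs chi enc dec \<tau> (removeAll y (fv (S M (\<sigma>(x := Var y))))) = z"
    unfolding r by (simp add: z_def Xs_def fv_S map_concat comp_def concat_concat2)
  have body: "S (S M (\<sigma>(x := Var y))) (\<tau>(y := Var z)) = S M ((\<lambda>u. S (\<sigma> u) \<tau>)(x := Var z))"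
    unfolding Pi.IH
  proof (rule S_cong)
    fix u assume u: "u \<in> set (fv M)"
    show "S ((\<sigma>(x := Var y)) u) (\<tau>(y := Var z)) = ((\<lambda>u. S (\<sigma> u) \<tau>)(x := Var z)) u"
    proof (cases "u = x")
      case False
      hence "y \<notin> set (fv (\<sigma> u))" using fy u L_def by auto
      thus ?thesis using False by (auto intro!: S_cong)
    qed simp
  qed
  have 1: "S (Pi x A M) \<sigma> = Pi y (S A \<sigma>) (S M (\<sigma>(x:=Var y)))"
    by (simp add: Let_def y_def L_def)
  have 2: "S (Pi y (S A \<sigma>) (S M (\<sigma>(x:=Var y)))) \<tau>
     = Pi z (S (S A \<sigma>) \<tau>) (S (S M (\<sigma>(x:=Var y))) (\<tau>(y := Var z)))"
    using zz by (simp add: Let_def)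
  have 3: "S (Pi x A M) (\<lambda>u. S (\<sigma> u) \<tau>) = Pi z (S A (\<lambda>u. S (\<sigma> u) \<tau>)) (S M ((\<lambda>u. S (\<sigma> u) \<tau>)(x := Var z)))"
    by (simp add: Let_def z_def L_def)
  show ?case unfolding 1 2 3 body by (simp only: Pi.IH)
qed auto

lemma concat_single: "concat (map (\<lambda>u. [u]) xs) = xs"
  by (induction xs) auto

lemma fv_usubst_rem:
  assumes "y \<notin> set (removeAll x (fv M))"
  shows "removeAll y (fv (usubst chi enc dec M x (Var y))) = removeAll x (fv M)"
  using rem_lemma[of y Var x "fv M"] assms unfolding usubst_def fv_S by (simp add: concat_single)

lemma ren:
  assumes "y \<notin> set (removeAll x (fv M))"
  shows "S (usubst chi enc dec M x (Var y)) (\<sigma>(y := N)) = S M (\<sigma>(x := N))"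
  unfolding usubst_def S_comp
proof (rule S_cong)
  fix u assume u: "u \<in> set (fv M)"
  show "S ((Var(x := Var y)) u) (\<sigma>(y := N)) = (\<sigma>(x := N)) u"
  proof (cases "u = x")
    case False
    hence "u \<noteq> y" using u assms by auto
    thus ?thesis using False by simp
  qed simp
qed

lemma alpha_S: "alpha chi enc dec M N \<Longrightarrow> S M \<sigma> = S N \<sigma>"
proof (induction arbitrary: \<sigma> rule: alpha.induct)
  case (alpha_lam A A' y x M x' M')
  have fvs: "removeAll x (fv M) = removeAll x' (fv M')"
    using fv_usubst_rem[OF alpha_lam.hyps(2)] fv_usubst_rem[OF alpha_lam.hyps(3)] alpha_lam.hyps(4) by simp
  define n where "n = Xs chi enc dec \<sigma> (removeAll x (fv M))"
  have "S M (\<sigma>(x := Var n)) = S M' (\<sigma>(x' := Var n))"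
    using ren[OF alpha_lam.hyps(2), of \<sigma> "Var n"] ren[OF alpha_lam.hyps(3), of \<sigma> "Var n"] alpha_lam.hyps(4)
    by simp
  thus ?case using alpha_lam.IH fvs by (simp add: Let_def n_def)
next
  case (alpha_pi A A' y x M x' M')
  have fvs: "removeAll x (fv M) = removeAll x' (fv M')"
    using fv_usubst_rem[OF alpha_pi.hyps(2)] fv_usubst_rem[OF alpha_pi.hyps(3)] alpha_pi.hyps(4) by simp
  define n where "n = Xs chi enc dec \<sigma> (removeAll x (fv M))"
  have "S M (\<sigma>(x := Var n)) = S M' (\<sigma>(x' := Var n))"
    using ren[OF alpha_pi.hyps(2), of \<sigma> "Var n"] ren[OF alpha_pi.hyps(3), of \<sigma> "Var n"] alpha_pi.hyps(4)
    by simp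
  thus ?case using alpha_pi.IH fvs by (simp add: Let_def n_def)
qed auto

lemma fresh_Var: "Xs chi enc dec Var xs \<notin> set xs"
  using fresh[of Var xs] by (simp add: concat_single)

lemma S_alpha: "S (M :: ('c, 'v) trm) Var = S N Var \<Longrightarrow> alpha chi enc dec M N"
proof (induction M arbitrary: N)
  case (Cst k)
  then show ?case by (cases N) (auto simp: Let_def intro: alpha.intros)
next
  case (Var x)
  then show ?case by (cases N) (auto simp: Let_def intro: alpha.intros)
next
  case (App M1 M2)
  then show ?case by (cases N) (auto simp: Let_def intro: alpha.intros)
next
  case (Lam x A M)
  show ?case
  proof (cases N)
    case (Lam x' A' M')
    define n where "n = Xs chi enc dec (Var :: _ \<Rightarrow> ('c, 'v) trm) (removeAll x (fv M))"
    define n' where "n' = Xs chi enc dec (Var :: _ \<Rightarrow> ('c, 'v) trm) (removeAll x' (fv M'))"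
    have eq0: "n = n' \<and> S A Var = S A' Var \<and> S M (Var(x := Var n)) = S M' (Var(x' := Var n'))"
      using Lam.prems unfolding Lam by (auto simp add: Let_def n_def n'_def)
    hence eq: "n = n'" "S A Var = S A' Var" "S M (Var(x := Var n)) = S M' (Var(x' := Var n))"
      by auto
    show ?thesis unfolding Lam
      apply (rule alpha_lam[where y = n])
      using Lam.IH(1) eq apply blast
      using fresh_Var n_def apply blast
      using fresh_Var n'_def eq(1) apply blast
      using eq(3) by (simp add: usubst_def)
  qed (use Lam.prems in \<open>auto simp: Let_def\<close>)
next
  case (Pi x A M)
  show ?case
  proof (cases N)
    case (Pi x' A' M')
    define n where "n = Xs chi enc dec (Var :: _ \<Rightarrow> ('c, 'v) trm) (removeAll x (fv M))"
    define n' where "n' = Xs chi enc dec (Var :: _ \<Rightarrow> ('c, 'v) trm) (removeAll x' (fv M'))"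
    have eq0: "n = n' \<and> S A Var = S A' Var \<and> S M (Var(x := Var n)) = S M' (Var(x' := Var n'))"
      using Pi.prems unfolding Pi by (auto simp add: Let_def n_def n'_def)
    hence eq: "n = n'" "S A Var = S A' Var" "S M (Var(x := Var n)) = S M' (Var(x' := Var n))"
      by auto
    show ?thesis unfolding Pi
      apply (rule alpha_pi[where y = n])
      using Pi.IH(1) eq apply blast
      using fresh_Var n_def apply blast
      using fresh_Var n'_def eq(1) apply blast
      using eq(3) by (simp add: usubst_def)
  qed (use Pi.prems in \<open>auto simp: Let_def\<close>)
qed

lemma alpha_iff: "alpha chi enc dec M N \<longleftrightarrow> S M Var = S N Var"
  using alpha_S S_alpha by blast

lemma alpha_refl: "alpha chi enc dec M M"
  by (simp add: alpha_iff)
lemma alpha_sym: "alpha chi enc dec M N \<Longrightarrow> alpha chi enc dec N M"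
  by (simp add: alpha_iff)
lemma alpha_trans: "alpha chi enc dec M N \<Longrightarrow> alpha chi enc dec N P \<Longrightarrow> alpha chi enc dec M P"
  by (simp add: alpha_iff)

lemma alpha_usubst_arg:
  "alpha chi enc dec N N' \<Longrightarrow> alpha chi enc dec (usubst chi enc dec B x N) (usubst chi enc dec B x N')"
  unfolding alpha_iff usubst_def S_comp
  by (rule arg_cong[where f="S B"]) auto

lemma alpha_Cst: "alpha chi enc dec (Cst k) N \<Longrightarrow> N = Cst k"
  by (cases rule: alpha.cases) auto
lemma alpha_Var: "alpha chi enc dec (Var x) N \<Longrightarrow> N = Var x"
  by (cases rule: alpha.cases) auto
lemma alpha_App: "alpha chi enc dec (App M1 M2) N \<Longrightarrow>
   \<exists>N1 N2. N = App N1 N2 \<and> alpha chi enc dec M1 N1 \<and> alpha chi enc dec M2 N2"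
  by (cases rule: alpha.cases) auto

lemma alpha_Pi:
  assumes a: "alpha chi enc dec (Pi x A B) N"
  shows "\<exists>x' A' B'. N = Pi x' A' B' \<and> alpha chi enc dec A A' \<and>
     (\<forall>z. usubst chi enc dec B x (Var z) = usubst chi enc dec B' x' (Var z))"
  using a
proof (cases rule: alpha.cases)
  case (alpha_pi A' y x' B')
  have "usubst chi enc dec B x (Var z) = usubst chi enc dec B' x' (Var z)" for z
    using ren[OF alpha_pi(3), of Var "Var z"] ren[OF alpha_pi(4), of Var "Var z"] alpha_pi(5)
    by (simp add: usubst_def)
  thus ?thesis using alpha_pi by blast
qed

lemma alpha_Lam:
  assumes a: "alpha chi enc dec (Lam x A B) N"
  shows "\<exists>x' A' B'. N = Lam x' A' B' \<and> alpha chi enc dec A A' \<and>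
     (\<forall>z. usubst chi enc dec B x (Var z) = usubst chi enc dec B' x' (Var z))"
  using a
proof (cases rule: alpha.cases)
  case (alpha_lam A' y x' B')
  have "usubst chi enc dec B x (Var z) = usubst chi enc dec B' x' (Var z)" for z
    using ren[OF alpha_lam(3), of Var "Var z"] ren[OF alpha_lam(4), of Var "Var z"] alpha_lam(5)
    by (simp add: usubst_def)
  thus ?thesis using alpha_lam by blast
qed

lemma alpha_Pi_cong:
  assumes a: "alpha chi enc dec A A'"
  shows "alpha chi enc dec (Pi x A B) (Pi x A' (B :: ('c, 'v) trm))"
proof -
  define n where "n = Xs chi enc dec (Var :: _ \<Rightarrow> ('c, 'v) trm) (removeAll x (fv B))"
  have f: "n \<notin> set (removeAll x (fv B))" unfolding n_def by (rule fresh_Var)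
  show ?thesis by (rule alpha_pi[OF a f f refl])
qed

lemma ctx_alpha_dom: "ctx_alpha chi enc dec \<Gamma> \<Delta> \<Longrightarrow> map fst \<Gamma> = map fst \<Delta>"
  unfolding ctx_alpha_def
  by (induction rule: list_all2_induct) auto

lemma ctx_alpha_mem: "ctx_alpha chi enc dec \<Gamma> \<Delta> \<Longrightarrow> (x, A) \<in> set \<Gamma> \<Longrightarrow>
   \<exists>C. (x, C) \<in> set \<Delta> \<and> alpha chi enc dec A C"
  unfolding ctx_alpha_def
  by (induction rule: list_all2_induct) auto

lemma ctx_alpha_cons: "ctx_alpha chi enc dec ((x, A) # \<Gamma>) \<Delta> \<Longrightarrow>
   \<exists>C \<Delta>'. \<Delta> = (x, C) # \<Delta>' \<and> alpha chi enc dec A C \<and> ctx_alpha chi enc dec \<Gamma> \<Delta>'"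
  unfolding ctx_alpha_def by (cases \<Delta>) auto

lemma ctx_alpha_nil: "ctx_alpha chi enc dec [] \<Delta> \<Longrightarrow> \<Delta> = []"
  unfolding ctx_alpha_def by simp

lemma ctx_alpha_Cons_intro: "ctx_alpha chi enc dec \<Gamma> \<Delta> \<Longrightarrow> alpha chi enc dec A C \<Longrightarrow>
   ctx_alpha chi enc dec ((y, A) # \<Gamma>) ((y, C) # \<Delta>)"
  unfolding ctx_alpha_def by simp

lemma weaken_aux:
  shows "ctx_ok chi enc dec Ax Rl \<Gamma> \<Longrightarrow> True"
    and "typing chi enc dec Ax Rl \<Gamma> M A \<Longrightarrow>
      (\<forall>\<Gamma>'. set \<Gamma> \<subseteq> set \<Gamma>' \<longrightarrow> ctx_ok chi enc dec Ax Rl \<Gamma>' \<longrightarrow> typing chi enc dec Ax Rl \<Gamma>' M A)"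
proof (induction rule: ctx_ok_typing.inducts)
  case (ty_prod s1 s2 s3 \<Gamma> A B x)
  show ?case
  proof (intro allI impI)
    fix \<Gamma>' assume sub: "set \<Gamma> \<subseteq> set \<Gamma>'" and ok: "ctx_ok chi enc dec Ax Rl \<Gamma>'"
    have tA: "typing chi enc dec Ax Rl \<Gamma>' A (Cst s1)" using ty_prod sub ok by blast
    show "typing chi enc dec Ax Rl \<Gamma>' (Pi x A B) (Cst s3)"
    proof (rule ctx_ok_typing.ty_prod[OF ty_prod(1) tA], intro allI impI)
      fix y assume y: "y \<notin> set (map fst \<Gamma>')"
      hence y': "y \<notin> set (map fst \<Gamma>)" using sub by force
      have ok': "ctx_ok chi enc dec Ax Rl ((y, A) # \<Gamma>')" by (rule ok_cons[OF ok tA y])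
      show "typing chi enc dec Ax Rl ((y, A) # \<Gamma>') (usubst chi enc dec B x (Var y)) (Cst s2)"
      proof -
        have "set ((y, A) # \<Gamma>) \<subseteq> set ((y, A) # \<Gamma>') \<longrightarrow> ctx_ok chi enc dec Ax Rl ((y, A) # \<Gamma>') \<longrightarrow>
           typing chi enc dec Ax Rl ((y, A) # \<Gamma>') (usubst chi enc dec B x (Var y)) (Cst s2)"
          using ty_prod(4) y' by blast
        thus ?thesis using ok' sub by auto
      qed
    qed
  qed
next
  case (ty_abs s1 s2 s3 \<Gamma> A B y M x)
  show ?case
  proof (intro allI impI)
    fix \<Gamma>' assume sub: "set \<Gamma> \<subseteq> set \<Gamma>'" and ok: "ctx_ok chi enc dec Ax Rl \<Gamma>'"
    have tA: "typing chi enc dec Ax Rl \<Gamma>' A (Cst s1)" using ty_abs sub ok by blast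
    show "typing chi enc dec Ax Rl \<Gamma>' (Lam x A M) (Pi y A B)"
    proof (rule ctx_ok_typing.ty_abs[OF ty_abs(1) tA]; intro allI impI)
      fix z assume z: "z \<notin> set (map fst \<Gamma>')"
      hence z': "z \<notin> set (map fst \<Gamma>)" using sub by force
      have ok': "ctx_ok chi enc dec Ax Rl ((z, A) # \<Gamma>')" by (rule ok_cons[OF ok tA z])
      show "typing chi enc dec Ax Rl ((z, A) # \<Gamma>') (usubst chi enc dec B y (Var z)) (Cst s2)"
      proof -
        have "set ((z, A) # \<Gamma>) \<subseteq> set ((z, A) # \<Gamma>') \<longrightarrow> ctx_ok chi enc dec Ax Rl ((z, A) # \<Gamma>') \<longrightarrow>
           typing chi enc dec Ax Rl ((z, A) # \<Gamma>') (usubst chi enc dec B y (Var z)) (Cst s2)"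
          using ty_abs(4) z' by blast
        thus ?thesis using ok' sub by auto
      qed
      show "typing chi enc dec Ax Rl ((z, A) # \<Gamma>') (usubst chi enc dec M x (Var z)) (usubst chi enc dec B y (Var z))"
      proof -
        have "set ((z, A) # \<Gamma>) \<subseteq> set ((z, A) # \<Gamma>') \<longrightarrow> ctx_ok chi enc dec Ax Rl ((z, A) # \<Gamma>') \<longrightarrow>
           typing chi enc dec Ax Rl ((z, A) # \<Gamma>') (usubst chi enc dec M x (Var z)) (usubst chi enc dec B y (Var z))"
          using ty_abs(5) z' by blast
        thus ?thesis using ok' sub by auto
      qed
    qed
  qed
next
  case (ty_app \<Gamma> M x A B N s)
  show ?case
  proof (intro allI impI)
    fix \<Gamma>' assume sub: "set \<Gamma> \<subseteq> set \<Gamma>'" and ok: "ctx_ok chi enc dec Ax Rl \<Gamma>'"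
    show "typing chi enc dec Ax Rl \<Gamma>' (App M N) (usubst chi enc dec B x N)"
      by (rule ctx_ok_typing.ty_app) (use ty_app sub ok in blast)+
  qed
next
  case (ty_conv \<Gamma> M A B s)
  show ?case
  proof (intro allI impI)
    fix \<Gamma>' assume sub: "set \<Gamma> \<subseteq> set \<Gamma>'" and ok: "ctx_ok chi enc dec Ax Rl \<Gamma>'"
    show "typing chi enc dec Ax Rl \<Gamma>' M B"
      by (rule ctx_ok_typing.ty_conv[where A = A]) (use ty_conv sub ok in blast)+
  qed
qed (auto intro: ctx_ok_typing.intros)

lemma weaken: "typing chi enc dec Ax Rl \<Gamma> M A \<Longrightarrow> set \<Gamma> \<subseteq> set \<Gamma>' \<Longrightarrow>
   ctx_ok chi enc dec Ax Rl \<Gamma>' \<Longrightarrow> typing chi enc dec Ax Rl \<Gamma>' M A"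
  using weaken_aux(2) by blast

lemma main_aux:
  fixes Ax :: "'c \<Rightarrow> 'c \<Rightarrow> bool"
  shows "ctx_ok chi enc dec Ax Rl \<Gamma> \<Longrightarrow>
      (\<forall>\<Delta>. ctx_alpha chi enc dec \<Gamma> \<Delta> \<longrightarrow> ctx_ok chi enc dec Ax Rl \<Delta> \<and>
        (\<forall>x C C'. (x, C) \<in> set \<Delta> \<longrightarrow> alpha chi enc dec C C' \<longrightarrow>
           (\<exists>s. typing chi enc dec Ax Rl \<Delta> C' (Cst s))))"
    and "typing chi enc dec Ax Rl \<Gamma> M A \<Longrightarrow>
      (\<forall>\<Delta> M' A'. ctx_alpha chi enc dec \<Gamma> \<Delta> \<longrightarrow> alpha chi enc dec M M' \<longrightarrow>
         alpha chi enc dec A A' \<longrightarrow> typing chi enc dec Ax Rl \<Delta> M' A')"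
proof (induction rule: ctx_ok_typing.inducts)
  case ok_nil
  then show ?case by (auto dest: ctx_alpha_nil intro: ctx_ok_typing.intros)
next
  case (ok_cons \<Gamma> A s x)
  show ?case
  proof (intro allI impI)
    fix \<Delta>0 assume ca: "ctx_alpha chi enc dec ((x, A) # \<Gamma>) \<Delta>0"
    then obtain C \<Delta> where D: "\<Delta>0 = (x, C) # \<Delta>" and aC: "alpha chi enc dec A C"
      and ca': "ctx_alpha chi enc dec \<Gamma> \<Delta>" using ctx_alpha_cons by blast
    have both: "ctx_ok chi enc dec Ax Rl \<Delta> \<and> (\<forall>z D D'. (z, D) \<in> set \<Delta> \<longrightarrow> alpha chi enc dec D D' \<longrightarrow>
           (\<exists>s. typing chi enc dec Ax Rl \<Delta> D' (Cst s)))"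
      using ok_cons ca' by blast
    have okD: "ctx_ok chi enc dec Ax Rl \<Delta>" using both by blast
    have memD: "\<And>z D D'. (z, D) \<in> set \<Delta> \<Longrightarrow> alpha chi enc dec D D' \<Longrightarrow>
           (\<exists>s. typing chi enc dec Ax Rl \<Delta> D' (Cst s))" using both by blast
    have tyA: "\<And>D'. alpha chi enc dec A D' \<Longrightarrow> typing chi enc dec Ax Rl \<Delta> D' (Cst s)"
      using ok_cons ca' alpha_refl by blast
    have xD: "x \<notin> set (map fst \<Delta>)" using ok_cons.hyps ctx_alpha_dom[OF ca'] by simp
    have ok0: "ctx_ok chi enc dec Ax Rl \<Delta>0" unfolding D
      by (rule ctx_ok_typing.ok_cons[OF okD tyA[OF aC] xD])
    have sub: "set \<Delta> \<subseteq> set \<Delta>0" unfolding D by auto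
    show "ctx_ok chi enc dec Ax Rl \<Delta>0 \<and>
        (\<forall>z D D'. (z, D) \<in> set \<Delta>0 \<longrightarrow> alpha chi enc dec D D' \<longrightarrow>
           (\<exists>s. typing chi enc dec Ax Rl \<Delta>0 D' (Cst s)))"
    proof (intro conjI ok0 allI impI)
      fix z D D' assume m: "(z, D) \<in> set \<Delta>0" and a: "alpha chi enc dec D D'"
      show "\<exists>s. typing chi enc dec Ax Rl \<Delta>0 D' (Cst s)"
      proof (cases "(z, D) = (x, C)")
        case True
        hence "alpha chi enc dec A D'" using aC a alpha_trans by blast
        thus ?thesis using tyA weaken[OF _ sub ok0] by blast
      next
        case False
        hence "(z, D) \<in> set \<Delta>" using m D by auto
        thus ?thesis using memD a weaken[OF _ sub ok0] by blast
      qed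
    qed
  qed
next
  case (ty_sort \<Gamma> s1 s2)
  then show ?case by (auto dest!: alpha_Cst intro: ctx_ok_typing.intros)
next
  case (ty_var \<Gamma> x A)
  show ?case
  proof (intro allI impI)
    fix \<Delta> and M' :: "('c, 'v) trm" and A' assume ca: "ctx_alpha chi enc dec \<Gamma> \<Delta>" and aM: "alpha chi enc dec (Var x) M'"
      and aA: "alpha chi enc dec A A'"
    have M': "M' = Var x" using alpha_Var[OF aM] .
    obtain C where mC: "(x, C) \<in> set \<Delta>" and aC: "alpha chi enc dec A C"
      using ctx_alpha_mem[OF ca ty_var.hyps] by blast
    have okD: "ctx_ok chi enc dec Ax Rl \<Delta>" using ty_var ca by blast
    have t1: "typing chi enc dec Ax Rl \<Delta> (Var x) C" by (rule ctx_ok_typing.ty_var[OF okD mC])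
    have aCA: "alpha chi enc dec C A'" using aC aA alpha_sym alpha_trans by blast
    then obtain s where "typing chi enc dec Ax Rl \<Delta> A' (Cst s)" using ty_var ca mC by blast
    thus "typing chi enc dec Ax Rl \<Delta> M' A'" unfolding M'
      by (rule ctx_ok_typing.ty_conv[OF t1 bconv_alpha[OF aCA]])
  qed
next
  case (ty_prod s1 s2 s3 \<Gamma> A B x)
  show ?case
  proof (intro allI impI)
    fix \<Delta> M' A0 assume ca: "ctx_alpha chi enc dec \<Gamma> \<Delta>" and aM: "alpha chi enc dec (Pi x A B) M'"
      and aA: "alpha chi enc dec (Cst s3) A0"
    obtain x' A' B' where M': "M' = Pi x' A' B'" and aA': "alpha chi enc dec A A'"
      and eqB: "\<And>z. usubst chi enc dec B x (Var z) = usubst chi enc dec B' x' (Var z)"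
      using alpha_Pi[OF aM] by blast
    have A0: "A0 = Cst s3" using alpha_Cst[OF aA] .
    have tA: "typing chi enc dec Ax Rl \<Delta> A' (Cst s1)" using ty_prod ca aA' alpha_refl by blast
    have dom: "map fst \<Gamma> = map fst \<Delta>" using ctx_alpha_dom[OF ca] .
    show "typing chi enc dec Ax Rl \<Delta> M' A0" unfolding M' A0
    proof (rule ctx_ok_typing.ty_prod[OF ty_prod(1) tA], intro allI impI)
      fix y assume y: "y \<notin> set (map fst \<Delta>)"
      hence y': "y \<notin> set (map fst \<Gamma>)" using dom by simp
      show "typing chi enc dec Ax Rl ((y, A') # \<Delta>) (usubst chi enc dec B' x' (Var y)) (Cst s2)"
        using ty_prod y' ctx_alpha_Cons_intro[OF ca aA'] alpha_refl eqB by metis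
    qed
  qed
next
  case (ty_abs s1 s2 s3 \<Gamma> A B y M x)
  show ?case
  proof (intro allI impI)
    fix \<Delta> M' A0 assume ca: "ctx_alpha chi enc dec \<Gamma> \<Delta>" and aM: "alpha chi enc dec (Lam x A M) M'"
      and aA: "alpha chi enc dec (Pi y A B) A0"
    obtain x' A1 M1 where M': "M' = Lam x' A1 M1" and aA1: "alpha chi enc dec A A1"
      and eqM: "\<And>z. usubst chi enc dec M x (Var z) = usubst chi enc dec M1 x' (Var z)"
      using alpha_Lam[OF aM] by blast
    obtain y' A2 B2 where A0: "A0 = Pi y' A2 B2" and aA2: "alpha chi enc dec A A2"
      and eqB: "\<And>z. usubst chi enc dec B y (Var z) = usubst chi enc dec B2 y' (Var z)"
      using alpha_Pi[OF aA] by blast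
    have dom: "map fst \<Gamma> = map fst \<Delta>" using ctx_alpha_dom[OF ca] .
    have tA1: "typing chi enc dec Ax Rl \<Delta> A1 (Cst s1)" using ty_abs ca aA1 alpha_refl by blast
    have tA2: "typing chi enc dec Ax Rl \<Delta> A2 (Cst s1)" using ty_abs ca aA2 alpha_refl by blast
    have t1: "typing chi enc dec Ax Rl \<Delta> (Lam x' A1 M1) (Pi y' A1 B2)"
    proof (rule ctx_ok_typing.ty_abs[OF ty_abs(1) tA1]; intro allI impI)
      fix z assume z: "z \<notin> set (map fst \<Delta>)"
      hence z': "z \<notin> set (map fst \<Gamma>)" using dom by simp
      show "typing chi enc dec Ax Rl ((z, A1) # \<Delta>) (usubst chi enc dec B2 y' (Var z)) (Cst s2)"
        using ty_abs z' ctx_alpha_Cons_intro[OF ca aA1] alpha_refl eqB by metis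
      show "typing chi enc dec Ax Rl ((z, A1) # \<Delta>) (usubst chi enc dec M1 x' (Var z)) (usubst chi enc dec B2 y' (Var z))"
        using ty_abs z' ctx_alpha_Cons_intro[OF ca aA1] alpha_refl eqB eqM by metis
    qed
    have t2: "typing chi enc dec Ax Rl \<Delta> (Pi y' A2 B2) (Cst s3)"
    proof (rule ctx_ok_typing.ty_prod[OF ty_abs(1) tA2], intro allI impI)
      fix z assume z: "z \<notin> set (map fst \<Delta>)"
      hence z': "z \<notin> set (map fst \<Gamma>)" using dom by simp
      show "typing chi enc dec Ax Rl ((z, A2) # \<Delta>) (usubst chi enc dec B2 y' (Var z)) (Cst s2)"
        using ty_abs z' ctx_alpha_Cons_intro[OF ca aA2] alpha_refl eqB by metis
    qed
    have a12: "alpha chi enc dec A1 A2" using aA1 aA2 alpha_sym alpha_trans by blast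
    show "typing chi enc dec Ax Rl \<Delta> M' A0" unfolding M' A0
      by (rule ctx_ok_typing.ty_conv[OF t1 bconv_alpha[OF alpha_Pi_cong[OF a12]] t2])
  qed
next
  case (ty_app \<Gamma> M x A B N s)
  show ?case
  proof (intro allI impI)
    fix \<Delta> M' A0 assume ca: "ctx_alpha chi enc dec \<Gamma> \<Delta>" and aM: "alpha chi enc dec (App M N) M'"
      and aA: "alpha chi enc dec (usubst chi enc dec B x N) A0"
    obtain M1 N1 where M': "M' = App M1 N1" and a1: "alpha chi enc dec M M1" and a2: "alpha chi enc dec N N1"
      using alpha_App[OF aM] by blast
    have t1: "typing chi enc dec Ax Rl \<Delta> M1 (Pi x A B)" using ty_app ca a1 alpha_refl by blast
    have t2: "typing chi enc dec Ax Rl \<Delta> N1 A" using ty_app ca a2 alpha_refl by blast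
    have aB: "alpha chi enc dec (usubst chi enc dec B x N) (usubst chi enc dec B x N1)"
      by (rule alpha_usubst_arg[OF a2])
    have t3: "typing chi enc dec Ax Rl \<Delta> (usubst chi enc dec B x N1) (Cst s)"
      using ty_app ca aB alpha_refl by blast
    have t4: "typing chi enc dec Ax Rl \<Delta> A0 (Cst s)"
      using ty_app ca aA alpha_refl by blast
    have a3: "alpha chi enc dec (usubst chi enc dec B x N1) A0" using aB aA alpha_sym alpha_trans by blast
    show "typing chi enc dec Ax Rl \<Delta> M' A0" unfolding M'
      by (rule ctx_ok_typing.ty_conv[OF ctx_ok_typing.ty_app[OF t1 t2 t3] bconv_alpha[OF a3] t4])
  qed
next
  case (ty_conv \<Gamma> M A B s)
  show ?case
  proof (intro allI impI)
    fix \<Delta> M' A0 assume ca: "ctx_alpha chi enc dec \<Gamma> \<Delta>" and aM: "alpha chi enc dec M M'"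
      and aA: "alpha chi enc dec B A0"
    have t1: "typing chi enc dec Ax Rl \<Delta> M' A" using ty_conv ca aM alpha_refl by blast
    have t2: "typing chi enc dec Ax Rl \<Delta> A0 (Cst s)" using ty_conv ca aA alpha_refl by blast
    have bc: "bconv chi enc dec A B" using ty_conv by blast
    show "typing chi enc dec Ax Rl \<Delta> M' A0"
      by (rule ctx_ok_typing.ty_conv[OF t1 bconv_trans[OF bc bconv_alpha[OF aA]] t2])
  qed
qed

end

theorem mainTheorem15:
  fixes chi :: "nat list \<Rightarrow> nat" and enc :: "'v \<Rightarrow> nat" and dec :: "nat \<Rightarrow> 'v"
    and Ax :: "'c \<Rightarrow> 'c \<Rightarrow> bool" and Rl :: "'c \<Rightarrow> 'c \<Rightarrow> 'c \<Rightarrow> bool"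
    and \<Gamma> \<Delta> :: "('c, 'v) ctx" and M A B :: "('c, 'v) trm"
  assumes enc_dec: "\<forall>n. enc (dec n) = n"
    and chi_fresh: "\<forall>ns. chi ns \<notin> set ns"
    and "ctx_alpha chi enc dec \<Gamma> \<Delta>"
    and "alpha chi enc dec A B"
    and "typing chi enc dec Ax Rl \<Gamma> M A"
  shows "typing chi enc dec Ax Rl \<Delta> M B"
proof -
  interpret P: pts chi enc dec using enc_dec chi_fresh by unfold_locales
  show ?thesis using P.main_aux(2)[OF assms(5)] assms(3,4) P.alpha_refl by blast
qed

end
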